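(* For $\lambda\in\mathscr{P}^n_C$, the element $x_\lambda\in W^0_{\mathrm{af}}$ lies in the set $(W^P)_{\mathrm{af}}$ of Peterson's coset representatives if and only if $\lambda_1\le n+1$. Equivariantly, under the bijection $\mathscr{P}^n_C\cong W^0_{\mathrm{af}}$, $\lambda\mapsto x_\lambda$, the subset $W^0_{\mathrm{af}}\cap(W^P)_{\mathrm{af}}$ corresponds to $\{\lambda\in\mathscr{P}^n_C:\lambda_1\le n+1\}$.
   Context: $W_{\mathrm{af}}$ is the affine Weyl group of type $C_n^{(1)}$ with generators $s_0,\dots,s_n$; $W=\langle s_1,\dots,s_n\rangle$ acts on $X^\vee=\bigoplus_{i=1}^n\mathbb{Z}\varepsilon_i$ ($s_i$ swaps $\varepsilon_i,\varepsilon_{i+1}$ for $i<n$; $s_n$ negates $\varepsilon_n$), with coroot lattice $Q^\vee$ spanned by $\varepsilon_i-\varepsilon_{i+1}$ ($i<n$) and $\varepsilon_n$; $W_{\mathrm{af}}\cong W\ltimes Q^\vee$ (elements $wt_\xi$, $wt_\xi w^{-1}=t_{w\xi}$), with $s_0=s_\theta t_{-\varepsilon_1}$, $s_\theta=s_1\cdots s_{n-1}s_ns_{n-1}\cdots s_1$. $W^0_{\mathrm{af}}$ is the set of minimal length representatives of $W_{\mathrm{af}}/W$. Let $e_1,\dots,e_n$ be the dual basis to $\varepsilon_1,\dots,\varepsilon_n$, and let $R_P^+=\{e_i-e_j:1\le i<j\le n\}$ be the positive roots of the Levi subgroup of the maximal parabolic $P$ of $\mathrm{Sp}_{2n}(\mathbb{C})$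 associated with $\alpha_n$ (i.e. with $W_P=\langle s_1,\dots,s_{n-1}\rangle$). The set $(W^P)_{\mathrm{af}}$ of Peterson's coset representatives consists of those $x=wt_\xi$ ($w\in W$, $\xi\in Q^\vee$) such that for all $\alpha\in R_P^+$: $\langle\xi,\alpha\rangle=0$ if $w(\alpha)>0$ and $\langle\xi,\alpha\rangle=-1$ if $w(\alpha)<0$. $\rho_i=s_{i-1}\cdots s_1s_0$ ($1\le i\le n$), $\rho_i=s_{2n-i+1}\cdots s_{n-1}s_ns_{n-1}\cdots s_1s_0$ ($n+1\le i\le 2n$). $\mathscr{P}^n_C$: partitions $\lambda=(\lambda_1\ge\dots\ge\lambda_l>0)$ with $\lambda_1\le2n$ and $\lambda_k<n\Rightarrow\lambda_k>\lambda_{k+1}$ (the empty partition has $\lambda_1=0$); $x_\lambda=\rho_{\lambda_l}\cdots\rho_{\lambda_1}$, giving a bijection $\mathscr{P}^n_C\to W^0_{\mathrm{af}}$. *)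

theory Defs
  imports Main
begin

text \<open>Signed indices: the vector \<open>\<epsilon>\<^sub>k\<close> for \<open>k \<in> {1..n}\<close>
  and \<open>\<epsilon>\<^sub>(\<^sub>-\<^sub>k\<^sub>) = -\<epsilon>\<^sub>k\<close>.  An element \<open>w\<close> of the finite Weyl group \<open>W\<close> of type C_n
  (signed permutations) is represented as an odd bijection \<open>int \<Rightarrow> int\<close> with
  \<open>w(\<epsilon>\<^sub>k) = \<epsilon>\<^sub>w\<^sub>(\<^sub>k\<^sub>)\<close>, equal to the identity outside \<open>{-n..-1} \<union> {1..n}\<close>.
  A coweight \<open>\<xi> = \<Sum> \<xi>\<^sub>k \<epsilon>\<^sub>k\<close> of X^vee is represented as the odd function
  \<open>int \<Rightarrow> int\<close> with value \<open>\<xi>\<^sub>k\<close> at \<open>k\<close>, \<open>-\<xi>\<^sub>k\<close> at \<open>-k\<close>, and 0 elsewhere;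
  then \<open>w \<xi> = \<xi> \<circ> w\<^sup>-\<^sup>1\<close>.  Note Q^vee = X^vee here.
  An element \<open>w t\<^sub>\<xi>\<close> of the affine Weyl group is the pair \<open>(w, \<xi>)\<close>.\<close>

type_synonym waf = "(int \<Rightarrow> int) \<times> (int \<Rightarrow> int)"

text \<open>Product: \<open>(w t\<^sub>\<xi>)(v t\<^sub>\<eta>) = w v t\<^sub>v\<^sub>\<^sup>-\<^sup>1\<^sub>\<xi>\<^sub>+\<^sub>\<eta>\<close>, and \<open>v\<^sup>-\<^sup>1 \<xi> = \<xi> \<circ> v\<close>.\<close>
definition waf_mult :: "waf \<Rightarrow> waf \<Rightarrow> waf" where
  "waf_mult x y = (fst x \<circ> fst y, \<lambda>k. snd x (fst y k) + snd y k)"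

definition waf_one :: waf where
  "waf_one = (id, \<lambda>_. 0)"

definition waf_prod :: "waf list \<Rightarrow> waf" where
  "waf_prod xs = foldr waf_mult xs waf_one"

definition sref :: "nat \<Rightarrow> nat \<Rightarrow> int \<Rightarrow> int" where
  "sref n i k =
    (if 1 \<le> i \<and> i < n then
       (if k = int i then int i + 1 else if k = int i + 1 then int i
        else if k = - int i then - int i - 1 else if k = - int i - 1 then - int i else k)
     else if i = n then (if k = int n \<or> k = - int n then - k else k)
     else k)"

definition s_theta :: "nat \<Rightarrow> int \<Rightarrow> int" where
  "s_theta n = foldr (\<circ>) (map (sref n) ([1..<n] @ [n] @ rev [1..<n])) id"

definition eps1 :: "int \<Rightarrow> int" where
  "eps1 k = (if k = 1 then 1 else if k = -1 then -1 else 0)"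

definition gen :: "nat \<Rightarrow> nat \<Rightarrow> waf" where
  "gen n i = (if i = 0 then (s_theta n, \<lambda>k. - eps1 k) else (sref n i, \<lambda>_. 0))"

definition rho :: "nat \<Rightarrow> nat \<Rightarrow> waf" where
  "rho n i = waf_prod (map (gen n)
     (if i \<le> n then rev [0..<i] else [2*n - i + 1..<n+1] @ rev [0..<n]))"

definition PC :: "nat \<Rightarrow> nat list set" where
  "PC n = {lam. sorted_wrt (\<ge>) lam \<and> (\<forall>p\<in>set lam. 0 < p \<and> p \<le> 2*n)
             \<and> (\<forall>k. Suc k < length lam \<longrightarrow> lam ! k \<le> n \<longrightarrow> lam ! k > lam ! Suc k)}"

definition lam1 :: "nat list \<Rightarrow> nat" where
  "lam1 lam = (case lam of [] \<Rightarrow> 0 | a # _ \<Rightarrow> a)"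

definition x_lam :: "nat \<Rightarrow> nat list \<Rightarrow> waf" where
  "x_lam n lam = waf_prod (map (rho n) (rev lam))"

text \<open>Coefficient of \<open>e\<^sub>k\<close> (k \<ge> 1) in \<open>e\<^sub>a\<close> for a signed index a, \<open>e\<^sub>-\<^sub>a = -e\<^sub>a\<close>.
  The action on weights is \<open>w(e\<^sub>a) = e\<^sub>w\<^sub>(\<^sub>a\<^sub>)\<close>.\<close>
definition ecoef :: "int \<Rightarrow> nat \<Rightarrow> int" where
  "ecoef a k = (if a = int k then 1 else if a = - int k then -1 else 0)"

text \<open>Positivity/negativity of a weight \<open>\<Sum> c\<^sub>k e\<^sub>k\<close> w.r.t. simple roots
  \<open>e\<^sub>i - e\<^sub>i\<^sub>+\<^sub>1, 2e\<^sub>n\<close>: for roots, positive iff first nonzero coefficient positive.\<close>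
definition pos_root :: "nat \<Rightarrow> (nat \<Rightarrow> int) \<Rightarrow> bool" where
  "pos_root n c = (\<exists>k\<in>{1..n}. c k > 0 \<and> (\<forall>m\<in>{1..<k}. c m = 0))"

definition neg_root :: "nat \<Rightarrow> (nat \<Rightarrow> int) \<Rightarrow> bool" where
  "neg_root n c = (\<exists>k\<in>{1..n}. c k < 0 \<and> (\<forall>m\<in>{1..<k}. c m = 0))"

text \<open>Peterson's coset representatives \<open>(W\<^sup>P)\<^sub>a\<^sub>f\<close>, \<open>W\<^sub>P = \<langle>s\<^sub>1..s\<^sub>n\<^sub>-\<^sub>1\<rangle>\<close>,
  \<open>R\<^sub>P\<^sup>+ = {e\<^sub>i - e\<^sub>j : i<j}\<close>; \<open>\<langle>\<xi>, e\<^sub>i - e\<^sub>j\<rangle> = \<xi>\<^sub>i - \<xi>\<^sub>j\<close>.\<close>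
definition WPaf :: "nat \<Rightarrow> waf set" where
  "WPaf n = {(w, \<xi>). \<forall>i j. 1 \<le> i \<longrightarrow> i < j \<longrightarrow> j \<le> n \<longrightarrow>
      (let c = (\<lambda>k. ecoef (w (int i)) k - ecoef (w (int j)) k) in
        (pos_root n c \<longrightarrow> \<xi> (int i) - \<xi> (int j) = 0) \<and>
        (neg_root n c \<longrightarrow> \<xi> (int i) - \<xi> (int j) = -1))}"

end

theory Submission
  imports Defs
begin


lemma waf_mult_assoc: "waf_mult (waf_mult x y) z = waf_mult x (waf_mult y z)"
  by (simp add: waf_mult_def comp_def add.assoc)

lemma waf_mult_one_left[simp]: "waf_mult waf_one y = y"
  by (simp add: waf_mult_def waf_one_def)

lemma waf_mult_one_right[simp]: "waf_mult x waf_one = x"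
  by (simp add: waf_mult_def waf_one_def)

lemma waf_prod_snoc: "waf_prod (xs @ [y]) = waf_mult (waf_prod xs) y"
  by (induction xs) (simp_all add: waf_prod_def waf_mult_assoc)

lemma x_lam_Cons: "x_lam n (a # rest) = waf_mult (x_lam n rest) (rho n a)"
  by (simp add: x_lam_def waf_prod_snoc)

lemma sref_invol: "sref n i (sref n i k) = k"
  by (auto simp: sref_def)

lemma sref_inj: "inj (sref n i)"
  by (metis injI sref_invol)

lemma sref_odd: "sref n i (-k) = - sref n i k"
  by (auto simp: sref_def)

definition oddf :: "(int \<Rightarrow> int) \<Rightarrow> bool" where
  "oddf f = (\<forall>k. f (-k) = - f k)"

lemma foldr_comp_id: "foldr (\<circ>) fs g = foldr (\<circ>) fs id \<circ> g"
  by (induction fs) (simp_all add: comp_assoc)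

lemma foldr_sref_inj: "inj (foldr (\<circ>) (map (sref n) L) id)"
proof (induction L)
  case Nil then show ?case by simp
next
  case (Cons a L)
  have "foldr (\<circ>) (map (sref n) (a # L)) id = sref n a \<circ> foldr (\<circ>) (map (sref n) L) id" by simp
  then show ?case using Cons inj_compose[OF sref_inj] by metis
qed

lemma foldr_sref_odd: "oddf (foldr (\<circ>) (map (sref n) L) id)"
  by (induction L) (auto simp: oddf_def sref_odd)

lemma s_theta_inj: "inj (s_theta n)"
  unfolding s_theta_def by (rule foldr_sref_inj)

lemma s_theta_odd: "oddf (s_theta n)"
  unfolding s_theta_def by (rule foldr_sref_odd)

lemma gen_fst: "fst (gen n i) = (if i = 0 then s_theta n else sref n i)"
  by (simp add: gen_def)

lemma fst_waf_prod: "fst (waf_prod xs) = foldr (\<circ>) (map fst xs) id"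
  by (induction xs) (auto simp: waf_prod_def waf_mult_def waf_one_def)

lemma snd_waf_prod_gen: "0 \<notin> set L \<Longrightarrow> snd (waf_prod (map (gen n) L @ [y])) = snd y"
  by (induction L) (auto simp: waf_prod_def waf_mult_def gen_def waf_one_def)

definition Bf :: "nat \<Rightarrow> nat \<Rightarrow> int \<Rightarrow> int" where
  "Bf n j = foldr (\<circ>) (map (sref n) (rev [1..<j])) id"
definition Af :: "nat \<Rightarrow> nat \<Rightarrow> int \<Rightarrow> int" where
  "Af n j = foldr (\<circ>) (map (sref n) [1..<j]) id"
definition Cf :: "nat \<Rightarrow> nat \<Rightarrow> int \<Rightarrow> int" where
  "Cf n m = foldr (\<circ>) (map (sref n) [m..<n+1]) id"

lemma Bf_explicit: "1 \<le> j \<Longrightarrow> j \<le> n \<Longrightarrow> Bf n j = (\<lambda>k. if k = 1 then int j else if k = -1 then - int j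
   else if 2 \<le> k \<and> k \<le> int j then k - 1 else if - int j \<le> k \<and> k \<le> -2 then k + 1 else k)"
proof (induction j rule: nat_induct_at_least)
  case base
  then show ?case by (auto simp: Bf_def)
next
  case (Suc j)
  have "Bf n (Suc j) = sref n j \<circ> Bf n j" using Suc by (simp add: Bf_def)
  then show ?case using Suc by (auto simp: sref_def fun_eq_iff)
qed

lemma Af_explicit: "1 \<le> j \<Longrightarrow> j \<le> n \<Longrightarrow> Af n j = (\<lambda>k. if k = int j then 1 else if k = - int j then -1
   else if 1 \<le> k \<and> k < int j then k + 1 else if - int j < k \<and> k \<le> -1 then k - 1 else k)"
proof (induction j rule: nat_induct_at_least)
  case base
  then show ?case by (auto simp: Af_def)
next
  case (Suc j)
  have "Af n (Suc j) = Af n j \<circ> sref n j" using Suc by (simp add: Af_def foldr_comp_id[of _ "sref n j"])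
  then show ?case using Suc by (auto simp: sref_def fun_eq_iff)
qed

lemma Cf_explicit: "1 \<le> m \<Longrightarrow> m \<le> n \<Longrightarrow> Cf n m = (\<lambda>k. if k = int n then - int m else if k = - int n then int m
   else if int m \<le> k \<and> k < int n then k + 1 else if - int n < k \<and> k \<le> - int m then k - 1 else k)"
proof (induction "n - m" arbitrary: m)
  case 0
  then have "m = n" by simp
  then have "[m..<n+1] = [n]" by simp
  then show ?case using 0 \<open>m = n\<close> by (auto simp: Cf_def sref_def fun_eq_iff)
next
  case (Suc d)
  then have "[m..<n+1] = m # [Suc m..<n+1]" by (simp add: upt_conv_Cons)
  then have "Cf n m = sref n m \<circ> Cf n (Suc m)" by (simp add: Cf_def)
  moreover have "Cf n (Suc m) = (\<lambda>k. if k = int n then - int (Suc m) else if k = - int n then int (Suc m)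
   else if int (Suc m) \<le> k \<and> k < int n then k + 1 else if - int n < k \<and> k \<le> - int (Suc m) then k - 1 else k)"
    using Suc by simp
  ultimately show ?case using Suc by (auto simp: sref_def fun_eq_iff)
qed

lemma s_theta_explicit: "1 \<le> n \<Longrightarrow> s_theta n = (\<lambda>k. if k = 1 then -1 else if k = -1 then 1 else k)"
proof -
  assume n: "1 \<le> n"
  have "s_theta n = Af n n \<circ> (sref n n \<circ> Bf n n)"
    unfolding s_theta_def Af_def Bf_def by (simp add: foldr_comp_id[of "map (sref n) [Suc 0..<n]" "sref n n \<circ> foldr (\<circ>) (map (sref n) (rev [Suc 0..<n])) id"])
  then show ?thesis using n by (auto simp: Af_explicit Bf_explicit sref_def fun_eq_iff)
qed




lemma map_gen_fst: "0 \<notin> set L \<Longrightarrow> map (fst \<circ> gen n) L = map (sref n) L"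
  by (induction L) (auto simp: gen_def)

lemma foldr_app_comp: "foldr (\<circ>) (xs @ ys) id = foldr (\<circ>) xs id \<circ> foldr (\<circ>) ys id"
  by (induction xs) (simp_all add: comp_assoc)

lemma rho_list_small: "1 \<le> a \<Longrightarrow> a \<le> n \<Longrightarrow>
   (if a \<le> n then rev [0..<a] else [2*n - a + 1..<n+1] @ rev [0..<n]) = rev [1..<a] @ [0]"
  by (simp add: upt_rec[of 0 a])

lemma rho_list_big: "n < a \<Longrightarrow> a \<le> 2*n \<Longrightarrow>
   (if a \<le> n then rev [0..<a] else [2*n - a + 1..<n+1] @ rev [0..<n]) = ([2*n - a + 1..<n+1] @ rev [1..<n]) @ [0]"
  by (simp add: upt_rec[of 0 n])

lemma rho_gen: "1 \<le> a \<Longrightarrow> a \<le> 2*n \<Longrightarrow> \<exists>L. 0 \<notin> set L \<and> rho n a = waf_prod (map (gen n) L @ [gen n 0])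
   \<and> (a \<le> n \<longrightarrow> L = rev [1..<a]) \<and> (n < a \<longrightarrow> L = [2*n - a + 1..<n+1] @ rev [1..<n])"
proof (cases "a \<le> n")
  case True
  assume "1 \<le> a"
  then have "rev [0..<a] = rev [1..<a] @ [0]" by (simp add: upt_conv_Cons)
  then show ?thesis using True by (intro exI[of _ "rev [1..<a]"]) (simp add: rho_def)
next
  case False
  assume "a \<le> 2*n"
  have "rho n a = waf_prod (map (gen n) (([2*n - a + 1..<n+1] @ rev [1..<n]) @ [0]))"
    unfolding rho_def using False \<open>a \<le> 2*n\<close> by (simp only: rho_list_big not_le)
  then have "rho n a = waf_prod (map (gen n) ([2*n - a + 1..<n+1] @ rev [1..<n]) @ [gen n 0])"
    by (simp only: map_append list.map)
  then show ?thesis using False by (intro exI[of _ "[2*n - a + 1..<n+1] @ rev [1..<n]"]) auto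
qed

lemma rho_snd: "1 \<le> a \<Longrightarrow> a \<le> 2*n \<Longrightarrow> snd (rho n a) = (\<lambda>k. - eps1 k)"
proof -
  assume a: "1 \<le> a" "a \<le> 2*n"
  then obtain L where L: "0 \<notin> set L" "rho n a = waf_prod (map (gen n) L @ [gen n 0])"
    using rho_gen[of a n] by blast
  show ?thesis unfolding L(2) snd_waf_prod_gen[OF L(1)] by (simp add: gen_def)
qed

lemma rho_fst_L: "0 \<notin> set L \<Longrightarrow> fst (waf_prod (map (gen n) L @ [gen n 0])) = foldr (\<circ>) (map (sref n) L) id \<circ> s_theta n"
proof -
  assume L: "0 \<notin> set L"
  have "fst (waf_prod (map (gen n) L @ [gen n 0])) = foldr (\<circ>) (map (sref n) L @ [s_theta n]) id"
    unfolding fst_waf_prod using L by (simp add: map_gen_fst gen_def)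
  also have "\<dots> = foldr (\<circ>) (map (sref n) L) id \<circ> s_theta n"
    unfolding foldr_app_comp by simp
  finally show ?thesis .
qed

lemma rho_fst_small: "1 \<le> a \<Longrightarrow> a \<le> n \<Longrightarrow> fst (rho n a) = Bf n a \<circ> s_theta n"
  using rho_gen[of a n] rho_fst_L by (auto simp: Bf_def)

lemma rho_fst_big: "n < a \<Longrightarrow> a \<le> 2*n \<Longrightarrow> fst (rho n a) = Cf n (2*n+1-a) \<circ> (Bf n n \<circ> s_theta n)"
proof -
  assume a: "n < a" "a \<le> 2*n"
  then obtain L where L: "0 \<notin> set L" "rho n a = waf_prod (map (gen n) L @ [gen n 0])"
     "L = [2*n - a + 1..<n+1] @ rev [1..<n]" using rho_gen[of a n] by auto
  have "fst (rho n a) = foldr (\<circ>) (map (sref n) L) id \<circ> s_theta n"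
    using L(1,2) rho_fst_L by metis
  also have "\<dots> = foldr (\<circ>) (map (sref n) [2*n - a + 1..<n+1] @ map (sref n) (rev [1..<n])) id \<circ> s_theta n"
    unfolding L(3) by (simp only: map_append)
  also have "2*n - a + 1 = 2*n+1-a" using a by simp
  also have "foldr (\<circ>) (map (sref n) [2*n+1-a..<n+1] @ map (sref n) (rev [1..<n])) id \<circ> s_theta n
      = Cf n (2*n+1-a) \<circ> (Bf n n \<circ> s_theta n)"
    unfolding foldr_app_comp Cf_def Bf_def by (simp only: comp_assoc)
  finally show ?thesis .
qed

lemma rho_val_small: "1 \<le> a \<Longrightarrow> a \<le> n \<Longrightarrow> 1 \<le> k \<Longrightarrow> k \<le> int n \<Longrightarrow>
   fst (rho n a) k = (if k = 1 then - int a else if k \<le> int a then k - 1 else k)"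
  by (simp add: rho_fst_small Bf_explicit s_theta_explicit)

lemma rho_val_big: "n < a \<Longrightarrow> a \<le> 2*n \<Longrightarrow> 1 \<le> k \<Longrightarrow> k \<le> int n \<Longrightarrow>
   fst (rho n a) k = (if k = 1 then int (2*n+1-a) else if k \<le> int (2*n+1-a) then k - 1 else k)"
  by (simp add: rho_fst_big Bf_explicit Cf_explicit s_theta_explicit)

lemma rho_fst_inj_odd: "1 \<le> a \<Longrightarrow> a \<le> 2*n \<Longrightarrow> inj (fst (rho n a)) \<and> oddf (fst (rho n a))"
proof (cases "a \<le> n")
  case True
  assume "1 \<le> a"
  then show ?thesis using True foldr_sref_inj foldr_sref_odd s_theta_inj s_theta_odd
    by (auto simp: rho_fst_small Bf_def inj_compose oddf_def)
next
  case False
  assume "a \<le> 2*n"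
  then show ?thesis using False foldr_sref_inj foldr_sref_odd s_theta_inj s_theta_odd
    by (auto simp: rho_fst_big Bf_def Cf_def inj_compose oddf_def)
qed




definition rk :: "nat \<Rightarrow> int \<Rightarrow> int" where
  "rk n a = (if a > 0 then a else 2 * int n + 1 + a)"

definition PP :: "nat \<Rightarrow> waf \<Rightarrow> int \<Rightarrow> int" where
  "PP n x k = 2 * int n * snd x k + rk n (fst x k)"

definition nice :: "nat \<Rightarrow> waf \<Rightarrow> bool" where
  "nice n x = (oddf (fst x) \<and> oddf (snd x) \<and> (\<forall>k. 1 \<le> k \<and> k \<le> int n \<longrightarrow> fst x k \<noteq> 0 \<and> \<bar>fst x k\<bar> \<le> int n)
     \<and> inj (fst x))"

lemma rk_neg: "b \<noteq> 0 \<Longrightarrow> rk n (-b) = 2 * int n + 1 - rk n b"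
  by (auto simp: rk_def)

lemma PP_mult:
  assumes nx: "nice n x" and vodd: "oddf v"
    and vr: "v k \<noteq> 0" "\<bar>v k\<bar> \<le> int n"
  shows "PP n (waf_mult x (v, \<lambda>k. - eps1 k)) k =
     (if v k > 0 then PP n x (v k) else 1 - PP n x (- v k) + 2 * int n) - 2 * int n * eps1 k"
proof (cases "v k > 0")
  case True
  then show ?thesis by (simp add: PP_def waf_mult_def algebra_simps)
next
  case False
  define j where "j = - v k"
  have j: "1 \<le> j" "j \<le> int n" using False vr j_def by auto
  have vk: "v k = - j" using j_def by simp
  obtain w xi where x: "x = (w, xi)" by fastforce
  have wj: "w j \<noteq> 0" using nx j x by (auto simp: nice_def)
  have "w (- j) = - w j" "xi (-j) = - xi j" using nx x by (auto simp: nice_def oddf_def)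
  then show ?thesis using False vk wj by (simp add: PP_def waf_mult_def x rk_neg algebra_simps)
qed

lemma nice_one: "nice n waf_one"
  by (auto simp: nice_def waf_one_def oddf_def)

lemma rho_range: "1 \<le> a \<Longrightarrow> a \<le> 2*n \<Longrightarrow> 1 \<le> k \<Longrightarrow> k \<le> int n \<Longrightarrow>
   fst (rho n a) k \<noteq> 0 \<and> \<bar>fst (rho n a) k\<bar> \<le> int n"
  by (cases "a \<le> n") (auto simp: rho_val_small rho_val_big)

lemma rho_pair: "1 \<le> a \<Longrightarrow> a \<le> 2*n \<Longrightarrow> rho n a = (fst (rho n a), \<lambda>k. - eps1 k)"
  using rho_snd by (metis prod.collapse)

lemma nice_mult:
  assumes nx: "nice n x" and a: "1 \<le> a" "a \<le> 2*n"
  shows "nice n (waf_mult x (rho n a))"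
proof -
  obtain w xi where x: "x = (w, xi)" by fastforce
  define v where "v = fst (rho n a)"
  have r: "rho n a = (v, \<lambda>k. - eps1 k)" using rho_pair[OF a] v_def by simp
  have vio: "inj v" "oddf v" using rho_fst_inj_odd[OF a] v_def by auto
  have vr: "\<And>k. 1 \<le> k \<Longrightarrow> k \<le> int n \<Longrightarrow> v k \<noteq> 0 \<and> \<bar>v k\<bar> \<le> int n" using rho_range[OF a] v_def by auto
  have wo: "oddf w" "oddf xi" "inj w" and wr: "\<And>k. 1 \<le> k \<Longrightarrow> k \<le> int n \<Longrightarrow> w k \<noteq> 0 \<and> \<bar>w k\<bar> \<le> int n"
    using nx x by (auto simp: nice_def)
  have "w (v k) \<noteq> 0 \<and> \<bar>w (v k)\<bar> \<le> int n" if k: "1 \<le> k" "k \<le> int n" for k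
  proof (cases "v k > 0")
    case True then show ?thesis using vr[OF k] wr[of "v k"] by auto
  next
    case False
    then have "w (v k) = - w (- v k)" using wo(1) unfolding oddf_def by (metis minus_minus)
    then show ?thesis using vr[OF k] wr[of "- v k"] False by auto
  qed
  moreover have "oddf (w \<circ> v)" using wo vio by (simp add: oddf_def)
  moreover have "oddf (\<lambda>k. xi (v k) + - eps1 k)" using wo vio by (simp add: oddf_def eps1_def)
  moreover have "inj (w \<circ> v)" using wo vio inj_compose by blast
  ultimately show ?thesis by (simp add: nice_def x r waf_mult_def)
qed

lemma PP_small:
  assumes nx: "nice n x" and a: "1 \<le> a" "a \<le> n" and k: "1 \<le> k" "k \<le> int n"
  shows "PP n (waf_mult x (rho n a)) k = (if k = 1 then 1 - PP n x (int a) else if k \<le> int a then PP n x (k - 1) else PP n x k)"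
proof -
  have a2: "a \<le> 2*n" using a by simp
  have r: "rho n a = (fst (rho n a), \<lambda>k. - eps1 k)" using rho_pair[OF a(1) a2] .
  have vio: "oddf (fst (rho n a))" using rho_fst_inj_odd[OF a(1) a2] by auto
  show ?thesis
    apply (subst r)
    apply (subst PP_mult[OF nx vio])
    using rho_range[OF a(1) a2 k] rho_val_small[OF a k] k by (auto simp: eps1_def)
qed

lemma PP_big:
  assumes nx: "nice n x" and a: "n < a" "a \<le> 2*n" and k: "1 \<le> k" "k \<le> int n"
  shows "PP n (waf_mult x (rho n a)) k = (if k = 1 then PP n x (int (2*n+1-a)) - 2 * int n
     else if k \<le> int (2*n+1-a) then PP n x (k - 1) else PP n x k)"
proof -
  have a1: "1 \<le> a" using a by simp
  have r: "rho n a = (fst (rho n a), \<lambda>k. - eps1 k)" using rho_pair[OF a1 a(2)] .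
  have vio: "oddf (fst (rho n a))" using rho_fst_inj_odd[OF a1 a(2)] by auto
  show ?thesis
    apply (subst r)
    apply (subst PP_mult[OF nx vio])
    using rho_range[OF a1 a(2) k] rho_val_big[OF a k] k by (auto simp: eps1_def)
qed




definition inc :: "nat \<Rightarrow> (int \<Rightarrow> int) \<Rightarrow> bool" where
  "inc n P = (\<forall>k. 1 \<le> k \<longrightarrow> k < int n \<longrightarrow> P k < P (k+1))"
definition good :: "nat \<Rightarrow> (int \<Rightarrow> int) \<Rightarrow> bool" where
  "good n P = (inc n P \<and> P (int n) - P 1 < 2 * int n)"
definition small :: "nat \<Rightarrow> int \<Rightarrow> (int \<Rightarrow> int) \<Rightarrow> bool" where
  "small n c P = (inc n P \<and> (\<forall>k. c < k \<longrightarrow> k \<le> int n \<longrightarrow> P k = k) \<and> 1 - c \<le> P 1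
     \<and> (\<forall>k. 1 \<le> k \<longrightarrow> k \<le> int n \<longrightarrow> P k \<le> int n))"
definition bad :: "nat \<Rightarrow> (int \<Rightarrow> int) \<Rightarrow> bool" where
  "bad n P = ((\<forall>k. 1 \<le> k \<longrightarrow> k < int n \<longrightarrow> P k < P (int n)) \<and> P (int n) - P 1 > 2 * int n)"

lemma inc_mono_aux: "inc n P \<Longrightarrow> 1 \<le> i \<Longrightarrow> i + 1 + int d \<le> int n \<Longrightarrow> P i < P (i + 1 + int d)"
proof (induction d)
  case 0 then show ?case by (simp add: inc_def)
next
  case (Suc d)
  then have "P i < P (i + 1 + int d)" by simp
  have h: "\<And>k. 1 \<le> k \<Longrightarrow> k < int n \<Longrightarrow> P k < P (k+1)" using Suc.prems(1) inc_def by auto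
  have "P (i + 1 + int d) < P (i + 1 + int d + 1)" by (rule h) (use Suc.prems in auto)
  moreover have "i + 1 + int (Suc d) = i + 1 + int d + 1" by simp
  ultimately show ?case using \<open>P i < P (i + 1 + int d)\<close> by simp
qed

lemma inc_mono: "inc n P \<Longrightarrow> 1 \<le> i \<Longrightarrow> i < j \<Longrightarrow> j \<le> int n \<Longrightarrow> P i < P j"
  using inc_mono_aux[of n P i "nat (j - i - 1)"] by simp

lemma inc_mono_le: "inc n P \<Longrightarrow> 1 \<le> i \<Longrightarrow> i \<le> j \<Longrightarrow> j \<le> int n \<Longrightarrow> P i \<le> P j"
  using inc_mono[of n P i j] by (cases "i = j") auto

lemma small_step:
  assumes s: "small n c P" and c: "0 \<le> c" "c < a" and a: "a \<le> int n"
    and Q: "\<And>k. 1 \<le> k \<Longrightarrow> k \<le> int n \<Longrightarrow> Q k = (if k = 1 then 1 - P a else if k \<le> a then P (k - 1) else P k)"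
  shows "small n a Q"
proof -
  have inc: "inc n P" and fx: "\<And>k. c < k \<Longrightarrow> k \<le> int n \<Longrightarrow> P k = k" and p1: "1 - c \<le> P 1"
    and le: "\<And>k. 1 \<le> k \<Longrightarrow> k \<le> int n \<Longrightarrow> P k \<le> int n"
    using s by (auto simp: small_def)
  have Pa: "P a = a" using fx c a by simp
  have "Q k < Q (k+1)" if k: "1 \<le> k" "k < int n" for k
  proof -
    consider "k = 1" "2 \<le> a" | "k = 1" "a < 2" | "k \<noteq> 1" "k + 1 \<le> a" | "k \<noteq> 1" "k = a" | "k \<noteq> 1" "a < k"
      by linarith
    then show ?thesis
    proof cases
      case 1 then show ?thesis using Q[of 1] Q[of 2] k Pa p1 c by simp
    next
      case 2 then show ?thesis using Q[of 1] Q[of 2] k Pa fx[of 2] c by simp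
    next
      case 3 then show ?thesis using Q[of k] Q[of "k+1"] k inc_mono[OF inc, of "k-1" k] by simp
    next
      case 4 then show ?thesis using Q[of k] Q[of "k+1"] k inc_mono[OF inc, of "k-1" "k+1"] by simp
    next
      case 5 then show ?thesis using Q[of k] Q[of "k+1"] k inc_mono[OF inc, of "k" "k+1"] by simp
    qed
  qed
  then have "inc n Q" by (simp add: inc_def)
  moreover have "\<forall>k. a < k \<longrightarrow> k \<le> int n \<longrightarrow> Q k = k" using Q fx c by auto
  moreover have "1 - a \<le> Q 1" using Q[of 1] Pa c a by simp
  moreover have "\<forall>k. 1 \<le> k \<longrightarrow> k \<le> int n \<longrightarrow> Q k \<le> int n" using Q le c Pa by auto
  ultimately show ?thesis by (simp add: small_def)
qed

lemma small_good: "small n c P \<Longrightarrow> c \<le> int n \<Longrightarrow> 1 \<le> n \<Longrightarrow> good n P"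
proof -
  assume s: "small n c P" "c \<le> int n" "1 \<le> n"
  then have "P (int n) \<le> int n" "1 - c \<le> P 1" "inc n P" unfolding small_def by auto
  then show ?thesis using s by (simp add: good_def)
qed

lemma good_step:
  assumes g: "good n P" and n: "1 \<le> n"
    and Q: "\<And>k. 1 \<le> k \<Longrightarrow> k \<le> int n \<Longrightarrow> Q k = (if k = 1 then P (int n) - 2 * int n else P (k - 1))"
  shows "good n Q"
proof -
  have inc: "inc n P" and sp: "P (int n) - P 1 < 2 * int n" using g by (auto simp: good_def)
  have "Q k < Q (k+1)" if k: "1 \<le> k" "k < int n" for k
  proof (cases "k = 1")
    case True then show ?thesis using Q[of 1] Q[of 2] k sp by simp
  next
    case False then show ?thesis using Q[of k] Q[of "k+1"] k inc_mono[OF inc, of "k-1" k] by simp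
  qed
  then have "inc n Q" by (simp add: inc_def)
  moreover have "Q (int n) - Q 1 < 2 * int n"
  proof (cases "n = 1")
    case True then show ?thesis using Q[of 1] by simp
  next
    case False
    then show ?thesis using Q[of 1] Q[of "int n"] n inc_mono[OF inc, of "int n - 1" "int n"] by simp
  qed
  ultimately show ?thesis by (simp add: good_def)
qed

lemma bad_step:
  assumes mx: "\<And>k. 1 \<le> k \<Longrightarrow> k < int n \<Longrightarrow> P k < P (int n)" and m: "1 \<le> m" "m < int n"
    and Q: "\<And>k. 1 \<le> k \<Longrightarrow> k \<le> int n \<Longrightarrow> Q k = (if k = 1 then P m - 2 * int n else if k \<le> m then P (k - 1) else P k)"
  shows "bad n Q"
proof -
  have Qn: "Q (int n) = P (int n)" using Q[of "int n"] m by simp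
  have "Q k < Q (int n)" if k: "1 \<le> k" "k < int n" for k
    using Q[of k] k m mx[of m] mx[of "k-1"] mx[of k] Qn by auto
  moreover have "Q (int n) - Q 1 > 2 * int n" using Qn Q[of 1] m mx[of m] by simp
  ultimately show ?thesis by (simp add: bad_def)
qed

lemma good_max: "good n P \<Longrightarrow> 1 \<le> k \<Longrightarrow> k < int n \<Longrightarrow> P k < P (int n)"
  unfolding good_def using inc_mono by blast

lemma bad_max: "bad n P \<Longrightarrow> 1 \<le> k \<Longrightarrow> k < int n \<Longrightarrow> P k < P (int n)"
  unfolding bad_def by blast

lemma PC_cons: "a # rest \<in> PC n \<Longrightarrow> rest \<in> PC n \<and> 1 \<le> a \<and> a \<le> 2*n \<and> lam1 rest \<le> a \<and> (a \<le> n \<longrightarrow> lam1 rest < a)"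
proof -
  assume h: "a # rest \<in> PC n"
  have "rest \<in> PC n"
  proof -
    have "\<forall>k. Suc k < length rest \<longrightarrow> rest ! k \<le> n \<longrightarrow> rest ! Suc k < rest ! k"
    proof (intro allI impI)
      fix k assume "Suc k < length rest" "rest ! k \<le> n"
      then show "rest ! Suc k < rest ! k" using h unfolding PC_def
        by (auto dest!: spec[of _ "Suc k"])
    qed
    then show ?thesis using h by (auto simp: PC_def)
  qed
  moreover have "1 \<le> a \<and> a \<le> 2*n" using h by (auto simp: PC_def)
  moreover have "lam1 rest \<le> a \<and> (a \<le> n \<longrightarrow> lam1 rest < a)"
  proof (cases rest)
    case Nil then show ?thesis using h by (auto simp: lam1_def PC_def)
  next
    case (Cons b r)
    then show ?thesis using h by (auto simp: lam1_def PC_def dest!: spec[of _ 0])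
  qed
  ultimately show ?thesis by blast
qed

lemma x_lam_Nil: "x_lam n [] = waf_one"
  by (simp add: x_lam_def waf_prod_def)

lemma nice_x: "lam \<in> PC n \<Longrightarrow> nice n (x_lam n lam)"
proof (induction lam)
  case Nil then show ?case by (simp add: x_lam_Nil nice_one)
next
  case (Cons a rest)
  then show ?case using PC_cons[OF Cons.prems] nice_mult by (simp add: x_lam_Cons)
qed

lemma PP_one: "1 \<le> k \<Longrightarrow> PP n waf_one k = k"
  by (simp add: PP_def waf_one_def rk_def)

lemma small_x: "lam \<in> PC n \<Longrightarrow> lam1 lam \<le> n \<Longrightarrow> small n (int (lam1 lam)) (PP n (x_lam n lam))"
proof (induction lam)
  case Nil then show ?case by (simp add: x_lam_Nil PP_one small_def inc_def lam1_def)
next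
  case (Cons a rest)
  have pc: "rest \<in> PC n" "1 \<le> a" "a \<le> 2*n" "lam1 rest \<le> a" "a \<le> n \<longrightarrow> lam1 rest < a"
    using PC_cons[OF Cons.prems(1)] by auto
  have an: "a \<le> n" using Cons.prems(2) by (simp add: lam1_def)
  have IH: "small n (int (lam1 rest)) (PP n (x_lam n rest))" using Cons.IH pc an by simp
  have nx: "nice n (x_lam n rest)" using nice_x pc by simp
  have "small n (int a) (PP n (x_lam n (a # rest)))"
    apply (rule small_step[OF IH])
    using pc an PP_small[OF nx pc(2) an] by (auto simp: x_lam_Cons)
  then show ?case by (simp add: lam1_def)
qed

lemma good_x: "1 \<le> n \<Longrightarrow> lam \<in> PC n \<Longrightarrow> lam1 lam \<le> n + 1 \<Longrightarrow> good n (PP n (x_lam n lam))"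
proof (induction lam)
  case Nil then show ?case using small_x[of "[]" n] small_good by (simp add: lam1_def)
next
  case (Cons a rest)
  have pc: "rest \<in> PC n" "1 \<le> a" "a \<le> 2*n" "lam1 rest \<le> a" "a \<le> n \<longrightarrow> lam1 rest < a"
    using PC_cons[OF Cons.prems(2)] by auto
  have a: "a \<le> n + 1" using Cons.prems(3) by (simp add: lam1_def)
  show ?case
  proof (cases "a \<le> n")
    case True
    then show ?thesis using small_x[OF Cons.prems(2)] small_good Cons.prems(1) by (simp add: lam1_def)
  next
    case False
    then have an: "a = n + 1" using a by simp
    have IH: "good n (PP n (x_lam n rest))" using Cons.IH Cons.prems(1) pc an by simp
    have nx: "nice n (x_lam n rest)" using nice_x pc by simp
    show ?thesis
      apply (rule good_step[OF IH Cons.prems(1)])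
      using PP_big[OF nx _ pc(3)] an by (auto simp: x_lam_Cons)
  qed
qed

lemma bad_x: "1 \<le> n \<Longrightarrow> lam \<in> PC n \<Longrightarrow> n + 2 \<le> lam1 lam \<Longrightarrow> bad n (PP n (x_lam n lam))"
proof (induction lam)
  case Nil then show ?case by (simp add: lam1_def)
next
  case (Cons a rest)
  have pc: "rest \<in> PC n" "1 \<le> a" "a \<le> 2*n" "lam1 rest \<le> a" "a \<le> n \<longrightarrow> lam1 rest < a"
    using PC_cons[OF Cons.prems(2)] by auto
  have a: "n + 2 \<le> a" using Cons.prems(3) by (simp add: lam1_def)
  have nx: "nice n (x_lam n rest)" using nice_x pc by simp
  have mx: "\<And>k. 1 \<le> k \<Longrightarrow> k < int n \<Longrightarrow> PP n (x_lam n rest) k < PP n (x_lam n rest) (int n)"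
  proof (cases "n + 2 \<le> lam1 rest")
    case True
    then show "\<And>k. 1 \<le> k \<Longrightarrow> k < int n \<Longrightarrow> PP n (x_lam n rest) k < PP n (x_lam n rest) (int n)"
      using Cons.IH Cons.prems(1) pc bad_max by blast
  next
    case False
    then show "\<And>k. 1 \<le> k \<Longrightarrow> k < int n \<Longrightarrow> PP n (x_lam n rest) k < PP n (x_lam n rest) (int n)"
      using good_x[OF Cons.prems(1) pc(1)] good_max by simp
  qed
  show ?case
    apply (rule bad_step[of n "PP n (x_lam n rest)" "int (2*n+1-a)"])
    apply (rule mx, assumption, assumption)
    using a pc(3) apply simp
    using a pc(3) apply simp
    using PP_big[OF nx _ pc(3)] a by (auto simp: x_lam_Cons)
qed




lemma roots_excl: "pos_root n c \<Longrightarrow> neg_root n c \<Longrightarrow> False"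
proof -
  assume p: "pos_root n c" and q: "neg_root n c"
  obtain k1 where k1: "k1 \<in> {1..n}" "c k1 > 0" "\<forall>m\<in>{1..<k1}. c m = 0" using p pos_root_def by blast
  obtain k2 where k2: "k2 \<in> {1..n}" "c k2 < 0" "\<forall>m\<in>{1..<k2}. c m = 0" using q neg_root_def by blast
  show False using k1 k2 by (cases k1 k2 rule: linorder_cases) auto
qed

lemma rk_range: "a \<noteq> 0 \<Longrightarrow> \<bar>a\<bar> \<le> int n \<Longrightarrow> 1 \<le> rk n a \<and> rk n a \<le> 2 * int n"
  by (auto simp: rk_def)

lemma rk_inj: "a \<noteq> 0 \<Longrightarrow> \<bar>a\<bar> \<le> int n \<Longrightarrow> b \<noteq> 0 \<Longrightarrow> \<bar>b\<bar> \<le> int n \<Longrightarrow> rk n a = rk n b \<Longrightarrow> a = b"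
  by (auto simp: rk_def split: if_splits)

lemma pos_lt:
  assumes a: "a \<noteq> 0" "\<bar>a\<bar> \<le> int n" and b: "b \<noteq> 0" "\<bar>b\<bar> \<le> int n" and lt: "rk n a < rk n b"
  shows "pos_root n (\<lambda>k. ecoef a k - ecoef b k)"
proof -
  define k where "k = nat (min \<bar>a\<bar> \<bar>b\<bar>)"
  have m1: "1 \<le> min \<bar>a\<bar> \<bar>b\<bar>" "min \<bar>a\<bar> \<bar>b\<bar> \<le> int n" using a b by auto
  have k: "k \<in> {1..n}" using m1 unfolding k_def by auto
  have z: "\<forall>m\<in>{1..<k}. ecoef a m - ecoef b m = 0" using k_def by (auto simp: ecoef_def)
  have "ecoef a k - ecoef b k > 0" using a b lt k_def by (auto simp: ecoef_def rk_def split: if_splits)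
  then show ?thesis using k z pos_root_def by blast
qed

lemma neg_gt:
  assumes a: "a \<noteq> 0" "\<bar>a\<bar> \<le> int n" and b: "b \<noteq> 0" "\<bar>b\<bar> \<le> int n" and lt: "rk n a > rk n b"
  shows "neg_root n (\<lambda>k. ecoef a k - ecoef b k)"
proof -
  define k where "k = nat (min \<bar>a\<bar> \<bar>b\<bar>)"
  have m1: "1 \<le> min \<bar>a\<bar> \<bar>b\<bar>" "min \<bar>a\<bar> \<bar>b\<bar> \<le> int n" using a b by auto
  have k: "k \<in> {1..n}" using m1 unfolding k_def by auto
  have z: "\<forall>m\<in>{1..<k}. ecoef a m - ecoef b m = 0" using k_def by (auto simp: ecoef_def)
  have "ecoef a k - ecoef b k < 0" using a b lt k_def by (auto simp: ecoef_def rk_def split: if_splits)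
  then show ?thesis using k z neg_root_def by blast
qed

lemma zero_not_pos: "\<not> pos_root n (\<lambda>k. ecoef a k - ecoef a k)"
  by (simp add: pos_root_def)

lemma h0: "(0::int) < N \<Longrightarrow> 0 < N*d + e \<Longrightarrow> N*d + e < N \<Longrightarrow> 0 < e \<Longrightarrow> e < N \<Longrightarrow> d = 0"
proof -
  assume h: "(0::int) < N" "0 < N*d + e" "N*d + e < N" "0 < e" "e < N"
  show "d = 0"
  proof (rule ccontr)
    assume "d \<noteq> 0"
    then consider "d \<ge> 1" | "d \<le> -1" by linarith
    then show False
    proof cases
      case 1 then have "N*d \<ge> N*1" using h by (intro mult_left_mono) auto
      then show False using h by linarith
    next
      case 2 then have "N*d \<le> N*(-1)" using h by (intro mult_left_mono) auto
      then show False using h by linarith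
    qed
  qed
qed

lemma h1: "(0::int) < N \<Longrightarrow> 0 < N*d + e \<Longrightarrow> N*d + e < N \<Longrightarrow> e < 0 \<Longrightarrow> -N < e \<Longrightarrow> d = 1"
proof -
  assume h: "(0::int) < N" "0 < N*d + e" "N*d + e < N" "e < 0" "-N < e"
  show "d = 1"
  proof (rule ccontr)
    assume "d \<noteq> 1"
    then consider "d \<ge> 2" | "d \<le> 0" by linarith
    then show False
    proof cases
      case 1 then have "N*d \<ge> N*2" using h by (intro mult_left_mono) auto
      then show False using h by linarith
    next
      case 2 then have "N*d \<le> N*0" using h by (intro mult_left_mono) auto
      then show False using h by linarith
    qed
  qed
qed

lemma good_WP:
  assumes nx: "nice n x" and g: "good n (PP n x)"
  shows "x \<in> WPaf n"
proof -
  obtain w xi where x: "x = (w, xi)" by fastforce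
  have wr: "\<And>k. 1 \<le> k \<Longrightarrow> k \<le> int n \<Longrightarrow> w k \<noteq> 0 \<and> \<bar>w k\<bar> \<le> int n" using nx x by (auto simp: nice_def)
  have inc: "inc n (PP n x)" and sp: "PP n x (int n) - PP n x 1 < 2 * int n" using g by (auto simp: good_def)
  have P: "\<And>k. PP n x k = 2 * int n * xi k + rk n (w k)" by (simp add: PP_def x)
  have "(pos_root n (\<lambda>k. ecoef (w (int i)) k - ecoef (w (int j)) k) \<longrightarrow> xi (int i) - xi (int j) = 0) \<and>
        (neg_root n (\<lambda>k. ecoef (w (int i)) k - ecoef (w (int j)) k) \<longrightarrow> xi (int i) - xi (int j) = -1)"
    if ij: "1 \<le> i" "i < j" "j \<le> n" for i j
  proof -
    let ?a = "w (int i)" and ?b = "w (int j)"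
    have ra: "?a \<noteq> 0" "\<bar>?a\<bar> \<le> int n" using wr[of "int i"] ij by auto
    have rb: "?b \<noteq> 0" "\<bar>?b\<bar> \<le> int n" using wr[of "int j"] ij by auto
    have d1: "PP n x (int i) < PP n x (int j)" using inc_mono[OF inc, of "int i" "int j"] ij by simp
    have d2: "PP n x (int j) - PP n x (int i) < 2 * int n"
      using inc_mono_le[OF inc, of 1 "int i"] inc_mono_le[OF inc, of "int j" "int n"] ij sp by simp
    have e: "PP n x (int j) - PP n x (int i) = 2 * int n * (xi (int j) - xi (int i)) + (rk n ?b - rk n ?a)"
      using P by (simp add: algebra_simps)
    have n0: "0 < 2 * int n" using ij by simp
    have rka: "1 \<le> rk n ?a \<and> rk n ?a \<le> 2 * int n" using rk_range[OF ra] .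
    have rkb: "1 \<le> rk n ?b \<and> rk n ?b \<le> 2 * int n" using rk_range[OF rb] .
    show ?thesis
    proof (intro conjI impI)
      assume p: "pos_root n (\<lambda>k. ecoef ?a k - ecoef ?b k)"
      have "rk n ?a < rk n ?b"
      proof (rule ccontr)
        assume "\<not> rk n ?a < rk n ?b"
        then consider "rk n ?a > rk n ?b" | "rk n ?a = rk n ?b" by linarith
        then show False
        proof cases
          case 1 then show False using neg_gt[OF ra rb] p roots_excl by blast
        next
          case 2 then have "?a = ?b" using rk_inj[OF ra rb] by simp
          then show False using p zero_not_pos by simp
        qed
      qed
      then have "xi (int j) - xi (int i) = 0"
        using h0[OF n0, of "xi (int j) - xi (int i)" "rk n ?b - rk n ?a"] d1 d2 e rka rkb by simp
      then show "xi (int i) - xi (int j) = 0" by simp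
    next
      assume p: "neg_root n (\<lambda>k. ecoef ?a k - ecoef ?b k)"
      have "rk n ?a > rk n ?b"
      proof (rule ccontr)
        assume "\<not> rk n ?a > rk n ?b"
        then consider "rk n ?a < rk n ?b" | "rk n ?a = rk n ?b" by linarith
        then show False
        proof cases
          case 1 then show False using pos_lt[OF ra rb] p roots_excl by blast
        next
          case 2 then have "?a = ?b" using rk_inj[OF ra rb] by simp
          then show False using p by (simp add: neg_root_def)
        qed
      qed
      then have "xi (int j) - xi (int i) = 1"
        using h1[OF n0, of "xi (int j) - xi (int i)" "rk n ?b - rk n ?a"] d1 d2 e rka rkb by simp
      then show "xi (int i) - xi (int j) = -1" by simp
    qed
  qed
  then show ?thesis by (simp add: WPaf_def x Let_def)
qed

lemma bad_notWP:
  assumes nx: "nice n x" and bd: "bad n (PP n x)" and n1: "1 \<le> n"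
  shows "x \<notin> WPaf n"
proof
  assume wp: "x \<in> WPaf n"
  obtain w xi where x: "x = (w, xi)" by fastforce
  have wr: "\<And>k. 1 \<le> k \<Longrightarrow> k \<le> int n \<Longrightarrow> w k \<noteq> 0 \<and> \<bar>w k\<bar> \<le> int n" using nx x by (auto simp: nice_def)
  have winj: "inj w" using nx x by (auto simp: nice_def)
  have sp: "PP n x (int n) - PP n x 1 > 2 * int n" using bd by (simp add: bad_def)
  have n2: "2 \<le> n" using sp n1 by (cases "n = 1") auto
  have P: "\<And>k. PP n x k = 2 * int n * xi k + rk n (w k)" by (simp add: PP_def x)
  let ?a = "w 1" and ?b = "w (int n)"
  have ra: "?a \<noteq> 0" "\<bar>?a\<bar> \<le> int n" using wr[of 1] n2 by auto
  have rb: "?b \<noteq> 0" "\<bar>?b\<bar> \<le> int n" using wr[of "int n"] n2 by auto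
  have ab: "?a \<noteq> ?b" using winj n2 by (metis inj_eq of_nat_1 of_nat_eq_iff Suc_1 not_less_eq_eq one_le_numeral order_antisym_conv)
  have rne: "rk n ?a \<noteq> rk n ?b" using rk_inj[OF ra rb] ab by blast
  have cond: "(pos_root n (\<lambda>k. ecoef ?a k - ecoef ?b k) \<longrightarrow> xi 1 - xi (int n) = 0) \<and>
        (neg_root n (\<lambda>k. ecoef ?a k - ecoef ?b k) \<longrightarrow> xi 1 - xi (int n) = -1)"
  proof -
    have "\<forall>i j. 1 \<le> i \<longrightarrow> i < j \<longrightarrow> j \<le> n \<longrightarrow>
      (let c = (\<lambda>k. ecoef (w (int i)) k - ecoef (w (int j)) k) in
        (pos_root n c \<longrightarrow> xi (int i) - xi (int j) = 0) \<and>
        (neg_root n c \<longrightarrow> xi (int i) - xi (int j) = -1))" using wp unfolding WPaf_def x by simp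
    then have "1 \<le> (1::nat) \<longrightarrow> 1 < n \<longrightarrow> n \<le> n \<longrightarrow>
      (let c = (\<lambda>k. ecoef (w (int 1)) k - ecoef (w (int n)) k) in
        (pos_root n c \<longrightarrow> xi (int 1) - xi (int n) = 0) \<and>
        (neg_root n c \<longrightarrow> xi (int 1) - xi (int n) = -1))" by blast
    then show ?thesis using n2 unfolding Let_def by simp
  qed
  have e: "PP n x (int n) - PP n x 1 = 2 * int n * (xi (int n) - xi 1) + (rk n ?b - rk n ?a)"
    using P by (simp add: algebra_simps)
  have rka: "1 \<le> rk n ?a \<and> rk n ?a \<le> 2 * int n" using rk_range[OF ra] .
  have rkb: "1 \<le> rk n ?b \<and> rk n ?b \<le> 2 * int n" using rk_range[OF rb] .
  show False
  proof (cases "rk n ?a < rk n ?b")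
    case True
    then have "xi 1 - xi (int n) = 0" using cond pos_lt[OF ra rb] by blast
    then show False using e sp rka rkb by simp
  next
    case False
    then have "rk n ?a > rk n ?b" using rne by linarith
    then have "xi 1 - xi (int n) = -1" using cond neg_gt[OF ra rb] by blast
    then have "xi (int n) - xi 1 = 1" by simp
    then show False using e sp rka rkb \<open>rk n ?a > rk n ?b\<close> by simp
  qed
qed

theorem corollary5p3:
  fixes n :: nat
  assumes "1 \<le> n"
  shows "(\<forall>lam\<in>PC n. x_lam n lam \<in> WPaf n \<longleftrightarrow> lam1 lam \<le> n + 1)
       \<and> x_lam n ` PC n \<inter> WPaf n = x_lam n ` {lam \<in> PC n. lam1 lam \<le> n + 1}"
proof -
  have main: "\<forall>lam\<in>PC n. x_lam n lam \<in> WPaf n \<longleftrightarrow> lam1 lam \<le> n + 1"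
  proof
    fix lam assume lam: "lam \<in> PC n"
    show "x_lam n lam \<in> WPaf n \<longleftrightarrow> lam1 lam \<le> n + 1"
    proof (cases "lam1 lam \<le> n + 1")
      case True
      then show ?thesis using good_WP[OF nice_x[OF lam] good_x[OF assms lam True]] by simp
    next
      case False
      then have "n + 2 \<le> lam1 lam" by simp
      then show ?thesis using bad_notWP[OF nice_x[OF lam] bad_x[OF assms lam] assms] False by simp
    qed
  qed
  moreover have "x_lam n ` PC n \<inter> WPaf n = x_lam n ` {lam \<in> PC n. lam1 lam \<le> n + 1}"
    using main by auto
  ultimately show ?thesis by blast
qed


end
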